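(* Let $(X,d,A)$ be a metric pair with $(X,d)$ complete. Then $(\overline{D}_\infty(X,A),W_\infty)$ is complete.
   Context: A metric on $X$ is a map $d:X\times X\to[0,\infty]$ with $d(x,x)=0$, symmetry and the triangle inequality (infinite distances allowed, $d(x,y)=0$ need not imply $x=y$, so limits need not be unique); complete means every Cauchy sequence converges. A metric pair $(X,d,A)$ is such a space with a closed subset $A$. Write $d(x,A)=\inf_{a\in A}d(x,a)$, $A^\delta=\{x:d(x,A)<\delta\}$. $\overline{D}(X,A)$ is the set of countable formal sums $\hat\alpha=\sum_{i\in I}x_i$ of points of $X\setminus A$ (repetitions allowed). A matching of $\hat\alpha=\sum_{i\in I}x_i$, $\hat\beta=\sum_{j\in J}y_j$ is a formal sum $\sum_{k\in K}(x_k,y_{\varphi(k)})+\sum_{i\in I\setminus K}(x_i,z_i)+\sum_{j\in J\setminus\varphi(K)}(w_j,y_j)$ with $K\subset I$, $\varphi$ injective, $z_i,w_j\in A$; its $\infty$-cost is the supremum of the distances of paired points, and $W_\infty(\alpha,\beta)$ is the infimum of $\infty$-costs over matchings. $u_\delta(\alpha)$ is the restriction of $\hat\alpha$ to $X\setminus A^\delta$, and $\overline{D}_\infty(X,A)=\{\alpha\in\overline{D}(X,A):|u_\delta(\alpha)|<\infty\text{ for all }\delta>0\}$. *)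

theory Defs
  imports "HOL-Analysis.Analysis"
begin

text \<open>Extended pseudometrics: values in [0,\<infinity>] (ennreal), d x y = 0 need not imply x = y.
  The ambient space X is the whole type 'a.\<close>
definition ext_metric :: "('a \<Rightarrow> 'a \<Rightarrow> ennreal) \<Rightarrow> bool" where
  "ext_metric d \<longleftrightarrow> (\<forall>x. d x x = 0) \<and> (\<forall>x y. d x y = d y x)
     \<and> (\<forall>x y z. d x z \<le> d x y + d y z)"

definition dist_set :: "('a \<Rightarrow> 'a \<Rightarrow> ennreal) \<Rightarrow> 'a \<Rightarrow> 'a set \<Rightarrow> ennreal" where
  "dist_set d x A = (INF a\<in>A. d x a)"

text \<open>Closed in the topology of open balls: contains every point at distance 0 from it.\<close>
definition closed_wrt :: "('a \<Rightarrow> 'a \<Rightarrow> ennreal) \<Rightarrow> 'a set \<Rightarrow> bool" where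
  "closed_wrt d A \<longleftrightarrow> (\<forall>x. dist_set d x A = 0 \<longrightarrow> x \<in> A)"

definition cauchy_wrt :: "('b \<Rightarrow> 'b \<Rightarrow> ennreal) \<Rightarrow> (nat \<Rightarrow> 'b) \<Rightarrow> bool" where
  "cauchy_wrt d s \<longleftrightarrow> (\<forall>e>0. \<exists>N. \<forall>m\<ge>N. \<forall>n\<ge>N. d (s m) (s n) < ennreal e)"

definition converges_to_wrt :: "('b \<Rightarrow> 'b \<Rightarrow> ennreal) \<Rightarrow> (nat \<Rightarrow> 'b) \<Rightarrow> 'b \<Rightarrow> bool" where
  "converges_to_wrt d s l \<longleftrightarrow> (\<forall>e>0. \<exists>N. \<forall>n\<ge>N. d (s n) l < ennreal e)"

definition complete_wrt :: "('b \<Rightarrow> 'b \<Rightarrow> ennreal) \<Rightarrow> 'b set \<Rightarrow> bool" where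
  "complete_wrt d S \<longleftrightarrow> (\<forall>s. (\<forall>n. s n \<in> S) \<and> cauchy_wrt d s \<longrightarrow> (\<exists>l\<in>S. converges_to_wrt d s l))"

text \<open>A countable formal sum \<Sum>_{i\<in>I} x_i is represented by a countable index set
  I \<subseteq> nat together with a labelling x : nat \<Rightarrow> 'a (values outside I irrelevant).\<close>
type_synonym 'a diag = "nat set \<times> (nat \<Rightarrow> 'a)"

definition Dbar :: "'a set \<Rightarrow> 'a diag set" where
  "Dbar A = {\<alpha>. \<forall>i\<in>fst \<alpha>. snd \<alpha> i \<notin> A}"

definition is_matching :: "'a set \<Rightarrow> 'a diag \<Rightarrow> 'a diag \<Rightarrow> nat set \<Rightarrow> (nat \<Rightarrow> nat)
    \<Rightarrow> (nat \<Rightarrow> 'a) \<Rightarrow> (nat \<Rightarrow> 'a) \<Rightarrow> bool" where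
  "is_matching A \<alpha> \<beta> K \<phi> z w \<longleftrightarrow> K \<subseteq> fst \<alpha> \<and> inj_on \<phi> K \<and> \<phi> ` K \<subseteq> fst \<beta>
     \<and> (\<forall>i\<in>fst \<alpha> - K. z i \<in> A) \<and> (\<forall>j\<in>fst \<beta> - \<phi> ` K. w j \<in> A)"

definition matching_cost :: "('a \<Rightarrow> 'a \<Rightarrow> ennreal) \<Rightarrow> 'a diag \<Rightarrow> 'a diag \<Rightarrow> nat set \<Rightarrow> (nat \<Rightarrow> nat)
    \<Rightarrow> (nat \<Rightarrow> 'a) \<Rightarrow> (nat \<Rightarrow> 'a) \<Rightarrow> ennreal" where
  "matching_cost d \<alpha> \<beta> K \<phi> z w =
     sup (SUP k\<in>K. d (snd \<alpha> k) (snd \<beta> (\<phi> k)))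
       (sup (SUP i\<in>fst \<alpha> - K. d (snd \<alpha> i) (z i))
            (SUP j\<in>fst \<beta> - \<phi> ` K. d (w j) (snd \<beta> j)))"

definition W_inf :: "('a \<Rightarrow> 'a \<Rightarrow> ennreal) \<Rightarrow> 'a set \<Rightarrow> 'a diag \<Rightarrow> 'a diag \<Rightarrow> ennreal" where
  "W_inf d A \<alpha> \<beta> = (INF m\<in>{(K, \<phi>, z, w). is_matching A \<alpha> \<beta> K \<phi> z w}.
       (case m of (K, \<phi>, z, w) \<Rightarrow> matching_cost d \<alpha> \<beta> K \<phi> z w))"

definition u_delta :: "('a \<Rightarrow> 'a \<Rightarrow> ennreal) \<Rightarrow> 'a set \<Rightarrow> real \<Rightarrow> 'a diag \<Rightarrow> nat set" where
  "u_delta d A \<delta> \<alpha> = {i\<in>fst \<alpha>. \<not> dist_set d (snd \<alpha> i) A < ennreal \<delta>}"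

definition Dbar_inf :: "('a \<Rightarrow> 'a \<Rightarrow> ennreal) \<Rightarrow> 'a set \<Rightarrow> 'a diag set" where
  "Dbar_inf d A = {\<alpha>\<in>Dbar A. \<forall>\<delta>>0. finite (u_delta d A \<delta> \<alpha>)}"

end

theory Submission
  imports Defs
begin
lemma cost_le_iff:
  "matching_cost d \<alpha> \<beta> K \<phi> z w \<le> c \<longleftrightarrow>
     (\<forall>k\<in>K. d (snd \<alpha> k) (snd \<beta> (\<phi> k)) \<le> c) \<and>
     (\<forall>i\<in>fst \<alpha> - K. d (snd \<alpha> i) (z i) \<le> c) \<and>
     (\<forall>j\<in>fst \<beta> - \<phi> ` K. d (w j) (snd \<beta> j) \<le> c)"
  by (simp add: matching_cost_def SUP_le_iff)

lemma W_inf_le: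
  assumes "is_matching A \<alpha> \<beta> K \<phi> z w"
  shows "W_inf d A \<alpha> \<beta> \<le> matching_cost d \<alpha> \<beta> K \<phi> z w"
  unfolding W_inf_def
  by (rule INF_lower2[of "(K, \<phi>, z, w)"]) (use assms in auto)

lemma W_inf_lessD:
  assumes "W_inf d A \<alpha> \<beta> < c"
  shows "\<exists>K \<phi> z w. is_matching A \<alpha> \<beta> K \<phi> z w \<and> matching_cost d \<alpha> \<beta> K \<phi> z w < c"
  using assms unfolding W_inf_def INF_less_iff by auto

lemma em_tri: "ext_metric d \<Longrightarrow> d x z \<le> d x y + d y z"
  by (simp add: ext_metric_def)
lemma em_sym: "ext_metric d \<Longrightarrow> d x y = d y x"
  by (simp add: ext_metric_def)
lemma em_refl: "ext_metric d \<Longrightarrow> d x x = 0"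
  by (simp add: ext_metric_def)

lemma dist_set_le: "a \<in> A \<Longrightarrow> dist_set d x A \<le> d x a"
  unfolding dist_set_def by (rule INF_lower)

lemma dist_set_lessD: "dist_set d x A < c \<Longrightarrow> \<exists>a\<in>A. d x a < c"
  unfolding dist_set_def INF_less_iff by auto

lemma compose_matching:
  assumes em: "ext_metric d"
    and m1: "is_matching A \<alpha> \<beta> K1 \<phi>1 z1 w1" and c1: "matching_cost d \<alpha> \<beta> K1 \<phi>1 z1 w1 \<le> a"
    and m2: "is_matching A \<beta> \<gamma> K2 \<phi>2 z2 w2" and c2: "matching_cost d \<beta> \<gamma> K2 \<phi>2 z2 w2 \<le> b"
  shows "W_inf d A \<alpha> \<gamma> \<le> a + b"
proof -
  define K where "K = {i\<in>K1. \<phi>1 i \<in> K2}"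
  define \<phi> where "\<phi> = \<phi>2 \<circ> \<phi>1"
  define z where "z i = (if i \<in> K1 then z2 (\<phi>1 i) else z1 i)" for i
  define w where "w j = (if j \<in> \<phi>2 ` K2 then w1 (inv_into K2 \<phi>2 j) else w2 j)" for j
  have M1: "K1 \<subseteq> fst \<alpha>" "inj_on \<phi>1 K1" "\<phi>1 ` K1 \<subseteq> fst \<beta>"
     "\<forall>i\<in>fst \<alpha> - K1. z1 i \<in> A" "\<forall>j\<in>fst \<beta> - \<phi>1 ` K1. w1 j \<in> A"
    using m1 by (auto simp: is_matching_def)
  have M2: "K2 \<subseteq> fst \<beta>" "inj_on \<phi>2 K2" "\<phi>2 ` K2 \<subseteq> fst \<gamma>"
     "\<forall>i\<in>fst \<beta> - K2. z2 i \<in> A" "\<forall>j\<in>fst \<gamma> - \<phi>2 ` K2. w2 j \<in> A"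
    using m2 by (auto simp: is_matching_def)
  have C1: "\<forall>k\<in>K1. d (snd \<alpha> k) (snd \<beta> (\<phi>1 k)) \<le> a"
     "\<forall>i\<in>fst \<alpha> - K1. d (snd \<alpha> i) (z1 i) \<le> a"
     "\<forall>j\<in>fst \<beta> - \<phi>1 ` K1. d (w1 j) (snd \<beta> j) \<le> a"
    using c1 unfolding cost_le_iff by auto
  have C2: "\<forall>k\<in>K2. d (snd \<beta> k) (snd \<gamma> (\<phi>2 k)) \<le> b"
     "\<forall>i\<in>fst \<beta> - K2. d (snd \<beta> i) (z2 i) \<le> b"
     "\<forall>j\<in>fst \<gamma> - \<phi>2 ` K2. d (w2 j) (snd \<gamma> j) \<le> b"
    using c2 unfolding cost_le_iff by auto
  have le1: "x \<le> a \<Longrightarrow> x \<le> a + b" for x :: ennreal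
    by (metis add.right_neutral add_mono zero_le)
  have le2: "x \<le> b \<Longrightarrow> x \<le> a + b" for x :: ennreal
    by (metis add.left_neutral add_mono zero_le)
  have tri: "d p r \<le> a + b" if "d p q \<le> a" "d q r \<le> b" for p q r
    using em_tri[OF em, of p r q] add_mono[OF that] by (rule order_trans)
  have match: "is_matching A \<alpha> \<gamma> K \<phi> z w"
    unfolding is_matching_def
  proof (intro conjI ballI)
    show "K \<subseteq> fst \<alpha>" using M1 by (auto simp: K_def)
    show "inj_on \<phi> K" unfolding \<phi>_def K_def using M1 M2
      by (auto simp: inj_on_def)
    show "\<phi> ` K \<subseteq> fst \<gamma>" using M2 by (auto simp: K_def \<phi>_def)
    fix i assume "i \<in> fst \<alpha> - K"
    then show "z i \<in> A" using M1 M2 by (auto simp: z_def K_def)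
  next
    fix j assume j: "j \<in> fst \<gamma> - \<phi> ` K"
    show "w j \<in> A"
    proof (cases "j \<in> \<phi>2 ` K2")
      case True
      then obtain k where k: "k \<in> K2" "j = \<phi>2 k" by auto
      have "inv_into K2 \<phi>2 j = k" using k M2(2) by (simp add: inv_into_f_f)
      moreover have "k \<notin> \<phi>1 ` K1" using k j by (auto simp: \<phi>_def K_def)
      ultimately show ?thesis using True M1 M2 k by (auto simp: w_def)
    next
      case False then show ?thesis using j M2 by (auto simp: w_def)
    qed
  qed
  have "matching_cost d \<alpha> \<gamma> K \<phi> z w \<le> a + b"
    unfolding cost_le_iff
  proof (intro conjI ballI)
    fix k assume "k \<in> K"
    then show "d (snd \<alpha> k) (snd \<gamma> (\<phi> k)) \<le> a + b"
      using C1 C2 by (intro tri[of _ "snd \<beta> (\<phi>1 k)"]) (auto simp: K_def \<phi>_def)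
  next
    fix i assume i: "i \<in> fst \<alpha> - K"
    show "d (snd \<alpha> i) (z i) \<le> a + b"
    proof (cases "i \<in> K1")
      case True
      then have "\<phi>1 i \<in> fst \<beta> - K2" using i M1 by (auto simp: K_def)
      then show ?thesis using True C1 C2 by (intro tri[of _ "snd \<beta> (\<phi>1 i)"]) (auto simp: z_def)
    next
      case False then show ?thesis using i C1 by (intro le1) (auto simp: z_def)
    qed
  next
    fix j assume j: "j \<in> fst \<gamma> - \<phi> ` K"
    show "d (w j) (snd \<gamma> j) \<le> a + b"
    proof (cases "j \<in> \<phi>2 ` K2")
      case True
      then obtain k where k: "k \<in> K2" "j = \<phi>2 k" by auto
      have inv: "inv_into K2 \<phi>2 j = k" using k M2(2) by (simp add: inv_into_f_f)
      moreover have "k \<notin> \<phi>1 ` K1" using k j by (auto simp: \<phi>_def K_def)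
      ultimately show ?thesis using True M2 k C1 C2
        by (intro tri[of _ "snd \<beta> k"]) (auto simp: w_def)
    next
      case False then show ?thesis using j C2 by (intro le2) (auto simp: w_def)
    qed
  qed
  with W_inf_le[OF match] show ?thesis by (rule order_trans)
qed

lemma W_inf_tri_less:
  assumes "ext_metric d" "W_inf d A \<alpha> \<beta> < a" "W_inf d A \<beta> \<gamma> < b"
  shows "W_inf d A \<alpha> \<gamma> \<le> a + b"
proof -
  obtain K1 \<phi>1 z1 w1 where "is_matching A \<alpha> \<beta> K1 \<phi>1 z1 w1" "matching_cost d \<alpha> \<beta> K1 \<phi>1 z1 w1 < a"
    using W_inf_lessD[OF assms(2)] by blast
  moreover obtain K2 \<phi>2 z2 w2 where "is_matching A \<beta> \<gamma> K2 \<phi>2 z2 w2" "matching_cost d \<beta> \<gamma> K2 \<phi>2 z2 w2 < b"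
    using W_inf_lessD[OF assms(3)] by blast
  ultimately show ?thesis using compose_matching[OF assms(1)] by (meson less_imp_le)
qed

lemma geo_chain:
  assumes em: "ext_metric d"
    and step: "\<And>t. t < n \<Longrightarrow> d (x t) (x (Suc t)) \<le> ennreal ((1/2)^(k+t))"
    and "m \<le> n"
  shows "d (x 0) (x m) + ennreal (2*(1/2)^(k+m)) \<le> ennreal (2*(1/2)^k)"
  using \<open>m \<le> n\<close>
proof (induction m)
  case 0
  then show ?case using em_refl[OF em] by simp
next
  case (Suc m)
  have e: "ennreal ((1/2)^(k+m)) + ennreal (2*(1/2)^(k+Suc m)) = ennreal (2*(1/2)^(k+m))"
    by (subst ennreal_plus[symmetric]) (auto)
  have "d (x 0) (x (Suc m)) + ennreal (2*(1/2)^(k+Suc m))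
      \<le> (d (x 0) (x m) + ennreal ((1/2)^(k+m))) + ennreal (2*(1/2)^(k+Suc m))"
    using em_tri[OF em, of "x 0" "x (Suc m)" "x m"] step[of m] Suc.prems
    by (intro add_right_mono) (meson Suc_le_lessD add_left_mono order_trans)
  also have "\<dots> = d (x 0) (x m) + ennreal (2*(1/2)^(k+m))"
    by (simp only: add.assoc e)
  also have "\<dots> \<le> ennreal (2*(1/2)^k)" using Suc by simp
  finally show ?case .
qed

lemma geo_chain':
  assumes em: "ext_metric d"
    and step: "\<And>t. t < n \<Longrightarrow> d (x t) (x (Suc t)) \<le> ennreal ((1/2)^(k+t))"
    and "m \<le> n"
  shows "d (x 0) (x m) \<le> ennreal (2*(1/2)^k)"
  using geo_chain[OF assms] by (meson add_increasing2 order_trans zero_le order_refl le_iff_add)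

lemma small_pow:
  fixes c e :: real
  assumes "0 < c" "0 < e"
  shows "\<exists>N. \<forall>n\<ge>N. c * (1/2)^n < e"
proof -
  obtain N where N: "(1/2::real)^N < e / c" using real_arch_pow_inv[of "e/c" "1/2"] assms by auto
  have "c * (1/2)^n < e" if "n \<ge> N" for n
  proof -
    have "(1/2::real)^n \<le> (1/2)^N" using that by (intro power_decreasing) auto
    then have "(1/2::real)^n < e / c" using N by linarith
    then show ?thesis using assms by (simp add: field_simps)
  qed
  then show ?thesis by blast
qed

lemma transfer_finite:
  assumes em: "ext_metric d" and m: "is_matching A \<alpha> \<gamma> K \<phi> z w"
    and c: "matching_cost d \<alpha> \<gamma> K \<phi> z w \<le> ennreal c" and c0: "0 \<le> c" and cd: "c < \<delta>/2"
    and fin: "finite (u_delta d A (\<delta>/2) \<alpha>)"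
  shows "finite (u_delta d A \<delta> \<gamma>)"
proof -
  have M: "K \<subseteq> fst \<alpha>" "\<phi> ` K \<subseteq> fst \<gamma>" "\<forall>j\<in>fst \<gamma> - \<phi> ` K. w j \<in> A"
    using m by (auto simp: is_matching_def)
  have C: "\<forall>k\<in>K. d (snd \<alpha> k) (snd \<gamma> (\<phi> k)) \<le> ennreal c"
     "\<forall>j\<in>fst \<gamma> - \<phi> ` K. d (w j) (snd \<gamma> j) \<le> ennreal c"
    using c unfolding cost_le_iff by auto
  have "u_delta d A \<delta> \<gamma> \<subseteq> \<phi> ` (u_delta d A (\<delta>/2) \<alpha> \<inter> K)"
  proof
    fix p assume p: "p \<in> u_delta d A \<delta> \<gamma>"
    then have p1: "p \<in> fst \<gamma>" and p2: "\<not> dist_set d (snd \<gamma> p) A < ennreal \<delta>"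
      by (auto simp: u_delta_def)
    show "p \<in> \<phi> ` (u_delta d A (\<delta>/2) \<alpha> \<inter> K)"
    proof (cases "p \<in> \<phi> ` K")
      case False
      then have "dist_set d (snd \<gamma> p) A \<le> ennreal c"
      proof -
        have "w p \<in> A" "d (w p) (snd \<gamma> p) \<le> ennreal c" using M C p1 False by auto
        then show ?thesis using dist_set_le[of "w p" A d "snd \<gamma> p"] em_sym[OF em, of "w p" "snd \<gamma> p"]
          by simp
      qed
      moreover have "ennreal c < ennreal \<delta>" using cd c0 by (intro ennreal_lessI) auto
      ultimately show ?thesis using p2 by (meson order_le_less_trans)
    next
      case True
      then obtain i where i: "i \<in> K" "p = \<phi> i" by auto
      have "\<not> dist_set d (snd \<alpha> i) A < ennreal (\<delta>/2)"
      proof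
        assume as: "dist_set d (snd \<alpha> i) A < ennreal (\<delta>/2)"
        obtain a where a: "a \<in> A" "d (snd \<alpha> i) a < ennreal (\<delta>/2)"
          using dist_set_lessD[OF as] by blast
        have "d (snd \<gamma> p) a \<le> d (snd \<gamma> p) (snd \<alpha> i) + d (snd \<alpha> i) a"
          by (rule em_tri[OF em])
        also have "\<dots> \<le> ennreal c + d (snd \<alpha> i) a"
          using C i em_sym[OF em, of "snd \<gamma> p" "snd \<alpha> i"] by (intro add_right_mono) simp
        also have "\<dots> < ennreal c + ennreal (\<delta>/2)"
          using a(2) by (simp add: ennreal_add_left_cancel_less)
        also have "\<dots> = ennreal (c + \<delta>/2)"
          using c0 cd by (intro ennreal_plus[symmetric]) auto
        also have "\<dots> < ennreal \<delta>" using cd c0 by (intro ennreal_lessI) auto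
        finally have "dist_set d (snd \<gamma> p) A < ennreal \<delta>"
          by (rule order_le_less_trans[OF dist_set_le[OF a(1)]])
        then show False using p2 by (rule notE[rotated])
      qed
      then show ?thesis using i M by (auto simp: u_delta_def)
    qed
  qed
  moreover have "finite (\<phi> ` (u_delta d A (\<delta>/2) \<alpha> \<inter> K))" using fin by simp
  ultimately show ?thesis by (rule finite_subset)
qed

locale chainsetup =
  fixes d :: "'a \<Rightarrow> 'a \<Rightarrow> ennreal" and A :: "'a set" and \<beta> :: "nat \<Rightarrow> 'a diag"
    and K :: "nat \<Rightarrow> nat set" and \<phi> :: "nat \<Rightarrow> nat \<Rightarrow> nat" and z w :: "nat \<Rightarrow> nat \<Rightarrow> 'a"
  assumes em: "ext_metric d" and compl: "complete_wrt d UNIV"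
    and match: "\<And>k. is_matching A (\<beta> k) (\<beta> (Suc k)) (K k) (\<phi> k) (z k) (w k)"
    and cost: "\<And>k. matching_cost d (\<beta> k) (\<beta> (Suc k)) (K k) (\<phi> k) (z k) (w k) \<le> ennreal ((1/2)^k)"
begin

abbreviation I where "I k \<equiv> fst (\<beta> k)"
abbreviation X where "X k \<equiv> snd (\<beta> k)"

lemma M1: "K k \<subseteq> I k" and M2: "inj_on (\<phi> k) (K k)" and M3: "\<phi> k ` K k \<subseteq> I (Suc k)"
  and M4: "i \<in> I k \<Longrightarrow> i \<notin> K k \<Longrightarrow> z k i \<in> A"
  and M5: "j \<in> I (Suc k) \<Longrightarrow> j \<notin> \<phi> k ` K k \<Longrightarrow> w k j \<in> A"
  using match[of k] by (auto simp: is_matching_def)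

lemma C1: "i \<in> K k \<Longrightarrow> d (X k i) (X (Suc k) (\<phi> k i)) \<le> ennreal ((1/2)^k)"
  and C2: "i \<in> I k \<Longrightarrow> i \<notin> K k \<Longrightarrow> d (X k i) (z k i) \<le> ennreal ((1/2)^k)"
  and C3: "j \<in> I (Suc k) \<Longrightarrow> j \<notin> \<phi> k ` K k \<Longrightarrow> d (w k j) (X (Suc k) j) \<le> ennreal ((1/2)^k)"
  using cost[of k] unfolding cost_le_iff by auto

primrec pos :: "nat \<Rightarrow> nat \<Rightarrow> nat \<Rightarrow> nat option" where
  "pos k i 0 = Some i"
| "pos k i (Suc t) = (case pos k i t of None \<Rightarrow> None
      | Some j \<Rightarrow> if j \<in> K (k+t) then Some (\<phi> (k+t) j) else None)"

lemma pos_SucD: "pos k i (Suc t) = Some j \<Longrightarrow> \<exists>j'. pos k i t = Some j' \<and> j' \<in> K (k+t) \<and> j = \<phi> (k+t) j'"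
  by (auto split: option.splits if_splits)

lemma pos_in: "i \<in> I k \<Longrightarrow> pos k i t = Some j \<Longrightarrow> j \<in> I (k+t)"
proof (induction t arbitrary: j)
  case 0 then show ?case by simp
next
  case (Suc t)
  from pos_SucD[OF Suc.prems(2)] obtain j' where "pos k i t = Some j'" "j' \<in> K (k+t)" "j = \<phi> (k+t) j'"
    by blast
  then show ?case using M3[of "k+t"] by auto
qed

lemma pos_None_mono: assumes "pos k i t = None" "t \<le> t'" shows "pos k i t' = None"
  using assms(2) by (induction t' rule: dec_induct) (use assms(1) in auto)

definition pt where "pt k i t = X (k+t) (the (pos k i t))"

lemma pt_step:
  assumes "pos k i (Suc t) \<noteq> None"
  shows "d (pt k i t) (pt k i (Suc t)) \<le> ennreal ((1/2)^(k+t))"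
proof -
  obtain j where j: "pos k i (Suc t) = Some j" using assms by auto
  from pos_SucD[OF j] obtain j' where "pos k i t = Some j'" "j' \<in> K (k+t)" "j = \<phi> (k+t) j'"
    by blast
  then show ?thesis using C1[of j' "k+t"] j by (simp add: pt_def)
qed

lemma pt_dist:
  assumes "pos k i t' \<noteq> None" "t \<le> t'"
  shows "d (pt k i t) (pt k i t') \<le> ennreal (2*(1/2)^(k+t))"
proof -
  have "d (pt k i (t+0)) (pt k i (t+(t'-t))) \<le> ennreal (2*(1/2)^(k+t))"
  proof (rule geo_chain'[OF em, where n="t'-t"])
    fix s assume s: "s < t' - t"
    have "Suc (t+s) \<le> t'" using s by linarith
    then have "pos k i (Suc (t+s)) \<noteq> None"
      using pos_None_mono[of k i "Suc (t+s)" t'] assms(1) by blast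
    then show "d (pt k i (t+s)) (pt k i (t + Suc s)) \<le> ennreal ((1/2)^(k+t+s))"
      using pt_step[of k i "t+s"] by (simp add: add.assoc)
  qed simp
  then show ?thesis using assms by simp
qed

definition inf where "inf k i \<longleftrightarrow> (\<forall>t. pos k i t \<noteq> None)"

lemma inf_cauchy: "inf k i \<Longrightarrow> cauchy_wrt d (pt k i)"
  unfolding cauchy_wrt_def
proof (intro allI impI)
  fix e :: real assume "inf k i" "0 < e"
  obtain N where N: "\<forall>n\<ge>N. 2*(1/2)^n < e" using small_pow[of 2 e] \<open>0 < e\<close> by auto
  have "d (pt k i m) (pt k i n) < ennreal e" if "m \<ge> N" "n \<ge> N" for m n
  proof -
    have b: "d (pt k i a) (pt k i b) < ennreal e" if "a \<ge> N" "a \<le> b" for a b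
    proof -
      have "d (pt k i a) (pt k i b) \<le> ennreal (2*(1/2)^(k+a))"
        using pt_dist[of k i b a] \<open>inf k i\<close> that by (auto simp: inf_def)
      also have "\<dots> < ennreal e" using N that \<open>0 < e\<close> by (intro ennreal_lessI) auto
      finally show ?thesis .
    qed
    show ?thesis
    proof (cases "m \<le> n")
      case True then show ?thesis using b that by auto
    next
      case False then show ?thesis using b[of n m] that em_sym[OF em, of "pt k i m" "pt k i n"] by auto
    qed
  qed
  then show "\<exists>N. \<forall>m\<ge>N. \<forall>n\<ge>N. d (pt k i m) (pt k i n) < ennreal e" by blast
qed

definition lim where "lim k i = (SOME y. converges_to_wrt d (pt k i) y)"

lemma lim_conv: "inf k i \<Longrightarrow> converges_to_wrt d (pt k i) (lim k i)"
  using compl inf_cauchy[of k i] unfolding complete_wrt_def lim_def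
  by (metis (no_types, lifting) UNIV_I someI_ex)

lemma lim_bound:
  assumes "inf k i"
  shows "d (pt k i t) (lim k i) \<le> ennreal (2*(1/2)^(k+t))"
proof (rule ennreal_le_epsilon)
  fix e :: real assume "0 < e"
  then obtain N where N: "\<forall>n\<ge>N. d (pt k i n) (lim k i) < ennreal e"
    using lim_conv[OF assms] unfolding converges_to_wrt_def by blast
  define n where "n = max N t"
  have "d (pt k i t) (lim k i) \<le> d (pt k i t) (pt k i n) + d (pt k i n) (lim k i)"
    by (rule em_tri[OF em])
  also have "\<dots> \<le> ennreal (2*(1/2)^(k+t)) + ennreal e"
    using pt_dist[of k i n t] assms N by (intro add_mono) (auto simp: inf_def n_def less_imp_le)
  finally show "d (pt k i t) (lim k i) \<le> ennreal (2*(1/2)^(k+t)) + ennreal e" .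
qed

end

context chainsetup begin

definition start where "start k i \<longleftrightarrow> i \<in> I k \<and> (k = 0 \<or> i \<notin> \<phi> (k-1) ` K (k-1))"

fun orig :: "nat \<Rightarrow> nat \<Rightarrow> nat \<times> nat" where
  "orig 0 i = (0, i)"
| "orig (Suc n) i = (if i \<in> \<phi> n ` K n then orig n (inv_into (K n) (\<phi> n) i) else (Suc n, i))"

lemma orig_props:
  "i \<in> I n \<Longrightarrow> fst (orig n i) \<le> n \<and> start (fst (orig n i)) (snd (orig n i))
     \<and> pos (fst (orig n i)) (snd (orig n i)) (n - fst (orig n i)) = Some i"
proof (induction n arbitrary: i)
  case 0 then show ?case by (simp add: start_def)
next
  case (Suc n)
  show ?case
  proof (cases "i \<in> \<phi> n ` K n")
    case True
    define i' where "i' = inv_into (K n) (\<phi> n) i"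
    have i': "i' \<in> K n" "\<phi> n i' = i" using True by (auto simp: i'_def inv_into_into f_inv_into_f)
    then have "i' \<in> I n" using M1 by auto
    note IH = Suc.IH[OF this]
    define k where "k = fst (orig n i')"
    define j where "j = snd (orig n i')"
    have o: "orig (Suc n) i = (k, j)" using True by (simp add: k_def j_def i'_def)
    have kn: "k \<le> n" using IH by (simp add: k_def)
    have "pos k j (Suc n - k) = pos k j (Suc (n - k))" using kn by (simp add: Suc_diff_le)
    also have "\<dots> = Some i" using IH i' kn by (simp add: k_def[symmetric] j_def[symmetric])
    finally show ?thesis using o IH kn by (simp add: k_def[symmetric] j_def[symmetric])
  next
    case False
    then show ?thesis using Suc.prems by (simp add: start_def)
  qed
qed

lemma orig_unique: "start k j \<Longrightarrow> pos k j t = Some i \<Longrightarrow> orig (k+t) i = (k, j)"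
proof (induction t arbitrary: i)
  case 0
  then show ?case by (cases k) (auto simp: start_def)
next
  case (Suc t)
  from pos_SucD[OF Suc.prems(2)] obtain i' where i': "pos k j t = Some i'" "i' \<in> K (k+t)" "i = \<phi> (k+t) i'"
    by blast
  have "inv_into (K (k+t)) (\<phi> (k+t)) i = i'" using i' M2 by (simp add: inv_into_f_f)
  then show ?case using i' Suc.IH[OF Suc.prems(1) i'(1)] by simp
qed

lemma start_in: "start k j \<Longrightarrow> j \<in> I k" by (simp add: start_def)

definition LS where "LS = {prod_encode (k,i) | k i. start k i \<and> inf k i \<and> lim k i \<notin> A}"
definition L where "L = (LS, \<lambda>p. lim (fst (prod_decode p)) (snd (prod_decode p)))"

lemma L_Dbar: "L \<in> Dbar A"
  unfolding Dbar_def L_def LS_def by auto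

lemma pt_orig: "i \<in> I n \<Longrightarrow> pt (fst (orig n i)) (snd (orig n i)) (n - fst (orig n i)) = X n i"
  using orig_props[of i n] by (simp add: pt_def)

definition Kn where "Kn n = {i \<in> I n. inf (fst (orig n i)) (snd (orig n i))
                               \<and> lim (fst (orig n i)) (snd (orig n i)) \<notin> A}"
definition \<phi>n where "\<phi>n n i = prod_encode (orig n i)"

lemma match_n_part1:
  "Kn n \<subseteq> fst (\<beta> n) \<and> inj_on (\<phi>n n) (Kn n) \<and> \<phi>n n ` Kn n \<subseteq> fst L"
proof (intro conjI)
  show "Kn n \<subseteq> fst (\<beta> n)" by (auto simp: Kn_def)
  show "inj_on (\<phi>n n) (Kn n)"
  proof (rule inj_onI)
    fix i i' assume a: "i \<in> Kn n" "i' \<in> Kn n" "\<phi>n n i = \<phi>n n i'"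
    then have e: "orig n i = orig n i'" and ii: "i \<in> I n" "i' \<in> I n"
      by (simp_all add: \<phi>n_def Kn_def)
    have "pos (fst (orig n i)) (snd (orig n i)) (n - fst (orig n i)) = Some i"
      using orig_props[OF ii(1)] by blast
    moreover have "pos (fst (orig n i)) (snd (orig n i)) (n - fst (orig n i)) = Some i'"
      unfolding e using orig_props[OF ii(2)] by blast
    ultimately show "i = i'" by simp
  qed
  show "\<phi>n n ` Kn n \<subseteq> fst L"
  proof
    fix p assume "p \<in> \<phi>n n ` Kn n"
    then obtain i where i: "i \<in> Kn n" "p = \<phi>n n i" by auto
    then have iI: "i \<in> I n" by (simp add: Kn_def)
    have s: "start (fst (orig n i)) (snd (orig n i))" using orig_props[OF iI] by blast
    have f: "inf (fst (orig n i)) (snd (orig n i))" "lim (fst (orig n i)) (snd (orig n i)) \<notin> A"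
      using i(1) by (simp_all add: Kn_def)
    have pe: "p = prod_encode (fst (orig n i), snd (orig n i))" by (simp add: i(2) \<phi>n_def)
    have "p \<in> LS" unfolding LS_def using s f pe by blast
    then show "p \<in> fst L" by (simp add: L_def)
  qed
qed

lemma K_part: "i \<in> Kn n \<Longrightarrow> d (X n i) (snd L (\<phi>n n i)) \<le> ennreal (4*(1/2)^n)"
proof -
  assume i: "i \<in> Kn n"
  then have iI: "i \<in> I n" by (simp add: Kn_def)
  define k where "k = fst (orig n i)"
  define j where "j = snd (orig n i)"
  have kn: "k \<le> n" using orig_props[OF iI] by (simp add: k_def)
  have "snd L (\<phi>n n i) = lim k j" by (simp add: L_def \<phi>n_def k_def j_def)
  moreover have "X n i = pt k j (n - k)" using pt_orig[OF iI] by (simp add: k_def j_def)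
  moreover have "inf k j" using i by (simp add: Kn_def k_def j_def)
  ultimately have "d (X n i) (snd L (\<phi>n n i)) \<le> ennreal (2*(1/2)^(k + (n-k)))"
    using lim_bound by simp
  also have "\<dots> \<le> ennreal (4*(1/2)^n)" using kn by (intro ennreal_leI) simp
  finally show ?thesis .
qed

end

context chainsetup begin

lemma z_exists:
  assumes iI: "i \<in> I n" and iK: "i \<notin> Kn n"
  shows "\<exists>a\<in>A. d (X n i) a \<le> ennreal (4*(1/2)^n)"
proof -
  define k where "k = fst (orig n i)"
  define j where "j = snd (orig n i)"
  have kn: "k \<le> n" and st: "start k j" and pi: "pos k j (n - k) = Some i"
    using orig_props[OF iI] by (simp_all add: k_def j_def)
  have Xi: "X n i = pt k j (n - k)" using pt_orig[OF iI] by (simp add: k_def j_def)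
  have kk: "k + (n - k) = n" using kn by simp
  show ?thesis
  proof (cases "inf k j")
    case True
    then have "lim k j \<in> A" using iK iI by (simp add: Kn_def k_def j_def)
    moreover have "d (X n i) (lim k j) \<le> ennreal (4*(1/2)^n)"
    proof -
      have "d (X n i) (lim k j) \<le> ennreal (2*(1/2)^(k + (n-k)))"
        unfolding Xi by (rule lim_bound[OF True])
      also have "\<dots> \<le> ennreal (4*(1/2)^n)" unfolding kk by (intro ennreal_leI) simp
      finally show ?thesis .
    qed
    ultimately show ?thesis by blast
  next
    case False
    then have ex: "\<exists>t. pos k j t = None" by (simp add: inf_def)
    define T where "T = (LEAST t. pos k j t = None)"
    have T: "pos k j T = None" unfolding T_def using ex by (rule LeastI_ex)
    have nT: "n - k < T"
    proof (rule ccontr)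
      assume "\<not> n - k < T"
      then have "pos k j (n - k) = None" using pos_None_mono[OF T] by simp
      then show False using pi by simp
    qed
    define t0 where "t0 = T - 1"
    have St0: "Suc t0 = T" using nT by (simp add: t0_def)
    have "pos k j t0 \<noteq> None"
    proof
      assume "pos k j t0 = None"
      then have "T \<le> t0" unfolding T_def by (rule Least_le)
      then show False using St0 by simp
    qed
    then obtain e where e: "pos k j t0 = Some e" by auto
    have eK: "e \<notin> K (k+t0)"
    proof
      assume "e \<in> K (k+t0)"
      then have "pos k j (Suc t0) \<noteq> None" using e by simp
      then show False using T St0 by simp
    qed
    have eI: "e \<in> I (k+t0)" using pos_in[OF start_in[OF st] e] .
    have nt0: "n - k \<le> t0" using nT St0 by simp
    have a: "z (k+t0) e \<in> A" using M4[OF eI eK] .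
    have d1: "d (X (k+t0) e) (z (k+t0) e) \<le> ennreal ((1/2)^n)"
    proof -
      have "d (X (k+t0) e) (z (k+t0) e) \<le> ennreal ((1/2)^(k+t0))" using C2[OF eI eK] .
      also have "\<dots> \<le> ennreal ((1/2)^n)" using nt0 kn
        by (intro ennreal_leI power_decreasing) auto
      finally show ?thesis .
    qed
    have d2: "d (X n i) (X (k+t0) e) \<le> ennreal (2*(1/2)^n)"
    proof -
      have "d (pt k j (n-k)) (pt k j t0) \<le> ennreal (2*(1/2)^(k+(n-k)))"
        using pt_dist[of k j t0 "n-k"] e nt0 by simp
      then show ?thesis using Xi e kk by (simp add: pt_def)
    qed
    have "d (X n i) (z (k+t0) e) \<le> d (X n i) (X (k+t0) e) + d (X (k+t0) e) (z (k+t0) e)"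
      by (rule em_tri[OF em])
    also have "\<dots> \<le> ennreal (2*(1/2)^n) + ennreal ((1/2)^n)" using d1 d2 by (rule add_mono[rotated])
    also have "\<dots> = ennreal (3*(1/2)^n)" by (subst ennreal_plus[symmetric]) auto
    also have "\<dots> \<le> ennreal (4*(1/2)^n)" by (intro ennreal_leI) simp
    finally show ?thesis using a by blast
  qed
qed

lemma w_exists:
  assumes pL: "p \<in> fst L" and pK: "p \<notin> \<phi>n n ` Kn n"
  shows "\<exists>a\<in>A. d a (snd L p) \<le> ennreal (4*(1/2)^n)"
proof -
  obtain k j where kj: "p = prod_encode (k, j)" "start k j" "inf k j" "lim k j \<notin> A"
    using pL by (auto simp: L_def LS_def)
  have sL: "snd L p = lim k j" by (simp add: L_def kj(1))
  have nk: "\<not> k \<le> n"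
  proof
    assume kn: "k \<le> n"
    have kk: "k + (n - k) = n" using kn by simp
    obtain i where i: "pos k j (n - k) = Some i" using kj(3) by (auto simp: inf_def)
    have iI: "i \<in> I n" using pos_in[OF start_in[OF kj(2)] i] kk by simp
    have o: "orig n i = (k, j)" using orig_unique[OF kj(2) i] kk by simp
    have "i \<in> Kn n" using iI o kj by (simp add: Kn_def)
    moreover have "\<phi>n n i = p" using o kj by (simp add: \<phi>n_def)
    ultimately show False using pK by blast
  qed
  then obtain k' where k': "k = Suc k'" "n \<le> k'" by (cases k) auto
  have jI: "j \<in> I (Suc k')" using start_in[OF kj(2)] k' by simp
  have jn: "j \<notin> \<phi> k' ` K k'" using kj(2) k' by (simp add: start_def)
  have a: "w k' j \<in> A" using M5[OF jI jn] .
  have d1: "d (w k' j) (X (Suc k') j) \<le> ennreal ((1/2)^k')" using C3[OF jI jn] .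
  have d2: "d (X (Suc k') j) (lim k j) \<le> ennreal (2*(1/2)^(Suc k'))"
    using lim_bound[OF kj(3), of 0] k' by (simp add: pt_def)
  have "d (w k' j) (lim k j) \<le> d (w k' j) (X (Suc k') j) + d (X (Suc k') j) (lim k j)"
    by (rule em_tri[OF em])
  also have "\<dots> \<le> ennreal ((1/2)^k') + ennreal (2*(1/2)^(Suc k'))" using d1 d2 by (rule add_mono)
  also have "\<dots> = ennreal (2*(1/2)^k')" by (subst ennreal_plus[symmetric]) auto
  also have "\<dots> \<le> ennreal (4*(1/2)^n)"
  proof (intro ennreal_leI)
    have "(1/2::real)^k' \<le> (1/2)^n" using k' by (intro power_decreasing) auto
    moreover have "(0::real) \<le> (1/2)^n" by simp
    ultimately show "2 * (1/2::real)^k' \<le> 4 * (1/2)^n" by linarith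
  qed
  finally show ?thesis using a sL by auto
qed

lemma L_match:
  "\<exists>Kx \<phi>x zx wx. is_matching A (\<beta> n) L Kx \<phi>x zx wx
      \<and> matching_cost d (\<beta> n) L Kx \<phi>x zx wx \<le> ennreal (4*(1/2)^n)"
proof -
  have "\<forall>i\<in>I n - Kn n. \<exists>a. a \<in> A \<and> d (X n i) a \<le> ennreal (4*(1/2)^n)"
    using z_exists by blast
  then obtain zf where zf: "\<forall>i\<in>I n - Kn n. zf i \<in> A \<and> d (X n i) (zf i) \<le> ennreal (4*(1/2)^n)"
    by (rule bchoice[elim_format]) blast
  have "\<forall>p\<in>fst L - \<phi>n n ` Kn n. \<exists>a. a \<in> A \<and> d a (snd L p) \<le> ennreal (4*(1/2)^n)"
    using w_exists by blast
  then obtain wf where wf: "\<forall>p\<in>fst L - \<phi>n n ` Kn n. wf p \<in> A \<and> d (wf p) (snd L p) \<le> ennreal (4*(1/2)^n)"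
    by (rule bchoice[elim_format]) blast
  have "is_matching A (\<beta> n) L (Kn n) (\<phi>n n) zf wf"
    unfolding is_matching_def using match_n_part1[of n] zf wf by blast
  moreover have "matching_cost d (\<beta> n) L (Kn n) (\<phi>n n) zf wf \<le> ennreal (4*(1/2)^n)"
    unfolding cost_le_iff using K_part zf wf by blast
  ultimately show ?thesis by blast
qed

lemma L_close: "W_inf d A (\<beta> n) L \<le> ennreal (4*(1/2)^n)"
  using L_match[of n] W_inf_le order_trans by blast

lemma L_Dbar_inf:
  assumes inD: "\<And>k. \<beta> k \<in> Dbar_inf d A"
  shows "L \<in> Dbar_inf d A"
  unfolding Dbar_inf_def
proof (intro CollectI conjI allI impI)
  show "L \<in> Dbar A" by (rule L_Dbar)
  fix \<delta> :: real assume \<delta>: "0 < \<delta>"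
  obtain N where N: "\<forall>n\<ge>N. 4*(1/2)^n < \<delta>/2" using small_pow[of 4 "\<delta>/2"] \<delta> by auto
  obtain Kx \<phi>x zx wx where m: "is_matching A (\<beta> N) L Kx \<phi>x zx wx"
     and c: "matching_cost d (\<beta> N) L Kx \<phi>x zx wx \<le> ennreal (4*(1/2)^N)"
    using L_match[of N] by blast
  have fin: "finite (u_delta d A (\<delta>/2) (\<beta> N))" using inD[of N] \<delta> by (simp add: Dbar_inf_def)
  show "finite (u_delta d A \<delta> L)"
    by (rule transfer_finite[OF em m c _ _ fin]) (use N in auto)
qed

end

theorem theorem6p3:
  fixes d :: "'a \<Rightarrow> 'a \<Rightarrow> ennreal" and A :: "'a set"
  assumes "ext_metric d" and "closed_wrt d A" and "complete_wrt d UNIV"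
  shows "complete_wrt (W_inf d A) (Dbar_inf d A)"
  unfolding complete_wrt_def
proof (intro allI impI)
  fix s assume "(\<forall>n. s n \<in> Dbar_inf d A) \<and> cauchy_wrt (W_inf d A) s"
  then have sD: "\<And>n. s n \<in> Dbar_inf d A" and cs: "cauchy_wrt (W_inf d A) s" by auto
  have "\<forall>k. \<exists>M. \<forall>m\<ge>M. \<forall>n\<ge>M. W_inf d A (s m) (s n) < ennreal ((1/2)^k)"
    using cs unfolding cauchy_wrt_def by simp
  then obtain M where M: "\<And>k. \<forall>m\<ge>M k. \<forall>n\<ge>M k. W_inf d A (s m) (s n) < ennreal ((1/2)^k)"
    by metis
  define N where "N k = Max (M ` {..k})" for k
  have NM: "M k \<le> N k" "M k \<le> N (Suc k)" for k
    unfolding N_def by (auto intro: Max_ge)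
  define \<beta> where "\<beta> k = s (N k)" for k
  have "\<forall>k. \<exists>m. is_matching A (\<beta> k) (\<beta> (Suc k)) (fst m) (fst (snd m)) (fst (snd (snd m))) (snd (snd (snd m)))
      \<and> matching_cost d (\<beta> k) (\<beta> (Suc k)) (fst m) (fst (snd m)) (fst (snd (snd m))) (snd (snd (snd m)))
         < ennreal ((1/2)^k)"
  proof
    fix k
    have "W_inf d A (\<beta> k) (\<beta> (Suc k)) < ennreal ((1/2)^k)"
      using M[of k] NM[of k] by (simp add: \<beta>_def)
    from W_inf_lessD[OF this] obtain K \<phi> z w where
      "is_matching A (\<beta> k) (\<beta> (Suc k)) K \<phi> z w" "matching_cost d (\<beta> k) (\<beta> (Suc k)) K \<phi> z w < ennreal ((1/2)^k)"
      by blast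
    then show "\<exists>m. is_matching A (\<beta> k) (\<beta> (Suc k)) (fst m) (fst (snd m)) (fst (snd (snd m))) (snd (snd (snd m)))
      \<and> matching_cost d (\<beta> k) (\<beta> (Suc k)) (fst m) (fst (snd m)) (fst (snd (snd m))) (snd (snd (snd m)))
         < ennreal ((1/2)^k)"
      by (intro exI[of _ "(K, \<phi>, z, w)"]) simp
  qed
  then obtain f where f: "\<And>k. is_matching A (\<beta> k) (\<beta> (Suc k)) (fst (f k)) (fst (snd (f k))) (fst (snd (snd (f k)))) (snd (snd (snd (f k))))
      \<and> matching_cost d (\<beta> k) (\<beta> (Suc k)) (fst (f k)) (fst (snd (f k))) (fst (snd (snd (f k)))) (snd (snd (snd (f k))))
         < ennreal ((1/2)^k)"
    by metis
  interpret C: chainsetup d A \<beta> "\<lambda>k. fst (f k)" "\<lambda>k. fst (snd (f k))" "\<lambda>k. fst (snd (snd (f k)))" "\<lambda>k. snd (snd (snd (f k)))"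
    by unfold_locales (use assms f in \<open>auto intro: less_imp_le\<close>)
  have LD: "C.L \<in> Dbar_inf d A" by (rule C.L_Dbar_inf) (simp add: \<beta>_def sD)
  have "converges_to_wrt (W_inf d A) s C.L"
    unfolding converges_to_wrt_def
  proof (intro allI impI)
    fix e :: real assume e: "0 < e"
    obtain k where k: "6*(1/2)^k < e" using small_pow[of 6 e] e by auto
    have "W_inf d A (s n) C.L < ennreal e" if n: "n \<ge> N k" for n
    proof -
      have w1: "W_inf d A (s n) (\<beta> k) < ennreal ((1/2)^k)"
        using M[of k] NM(1)[of k] n by (simp add: \<beta>_def)
      have "W_inf d A (\<beta> k) C.L \<le> ennreal (4*(1/2)^k)" by (rule C.L_close)
      also have "\<dots> < ennreal (5*(1/2)^k)" by (intro ennreal_lessI) auto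
      finally have w2: "W_inf d A (\<beta> k) C.L < ennreal (5*(1/2)^k)" .
      have "W_inf d A (s n) C.L \<le> ennreal ((1/2)^k) + ennreal (5*(1/2)^k)"
        by (rule W_inf_tri_less[OF assms(1) w1 w2])
      also have "\<dots> = ennreal (6*(1/2)^k)" by (subst ennreal_plus[symmetric]) auto
      also have "\<dots> < ennreal e" using k e by (intro ennreal_lessI) auto
      finally show ?thesis .
    qed
    then show "\<exists>N. \<forall>n\<ge>N. W_inf d A (s n) C.L < ennreal e" by blast
  qed
  with LD show "\<exists>l\<in>Dbar_inf d A. converges_to_wrt (W_inf d A) s l" by blast
qed

end
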